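(* (i) For every integer $d\geq 2$ there exist a partition $\mathcal{P}$ of $\mathbb{R}^{d}$ and $M\in(0,\infty)$ such that every $X\in\mathcal{P}$ is Lebesgue measurable with $m(X)<M$, together with a function $\epsilon:\mathbb{R}^{d}\to(0,\infty)$ such that $|\mathcal{N}_{\epsilon(\vec{p})}(\vec{p})|\leq d$ for all $\vec{p}\in\mathbb{R}^{d}$. (ii) For $d=1$: if $\mathcal{P}$ is a partition of $\mathbb{R}$ and $M\in(0,\infty)$ is such that every $X\in\mathcal{P}$ is Lebesgue measurable with $m(X)<M$, then for every function $\epsilon:\mathbb{R}\to(0,\infty)$ there exists $p\in\mathbb{R}$ with $|\mathcal{N}_{\epsilon(p)}(p)|\geq 2$.
   Context: $m$ is Lebesgue measure. On $\mathbb{R}^d$ use $d_{max}(\vec{x},\vec{y})=\max_i|x_i-y_i|$, $\overline{B}_{r}(\vec{p})=\{\vec{x}:d_{max}(\vec{x},\vec{p})\le r\}$ and $\mathcal{N}_{r}(\vec{p})=\{X\in\mathcal{P}: X\cap\overline{B}_{r}(\vec{p})\neq\emptyset\}$. *)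

theory Defs
  imports "HOL-Analysis.Analysis" "HOL-Library.Disjoint_Sets"
begin

definition maxball :: "real^'n \<Rightarrow> real \<Rightarrow> (real^'n) set" where
  "maxball p r = {x. \<forall>i. \<bar>x$i - p$i\<bar> \<le> r}"

definition maxball1 :: "real \<Rightarrow> real \<Rightarrow> real set" where
  "maxball1 p r = {x. \<bar>x - p\<bar> \<le> r}"

definition nbhd :: "'a set set \<Rightarrow> 'a set \<Rightarrow> 'a set set" where
  "nbhd P B = {X \<in> P. X \<inter> B \<noteq> {}}"

end

theory Submission
imports Defs
begin

definition mx :: "real^'n \<Rightarrow> real" where "mx x = Max (range (\<lambda>i. \<bar>x$i\<bar>))"
definition gg :: "real^'n \<Rightarrow> real" where "gg x = (2 * mx x) ^ CARD('n)"

lemma mx_nonneg: "0 \<le> mx (x::real^'n)"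
  proof -
  obtain i :: 'n where True by simp
  have "\<bar>x$i\<bar> \<le> mx x" unfolding mx_def by (rule Max_ge) auto
  then show ?thesis by linarith
qed

lemma mx_less: "mx x < a \<longleftrightarrow> (\<forall>i. \<bar>x$i\<bar> < a)"
  unfolding mx_def by (subst Max_less_iff) auto

lemma mx_le: "mx x \<le> a \<longleftrightarrow> (\<forall>i. \<bar>x$i\<bar> \<le> a)"
  unfolding mx_def by (subst Max_le_iff) auto

lemma gg_less:
  assumes "0 \<le> c"
  shows "{x::real^'n. gg x < c} = box (\<chi> i. -(root CARD('n) c/2)) (\<chi> i. root CARD('n) c/2)"
proof -
  have d: "0 < CARD('n)" by simp
  have key: "gg x < c \<longleftrightarrow> 2 * mx x < root CARD('n) c" for x :: "real^'n"
  proof -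
    have "gg x < c \<longleftrightarrow> root CARD('n) (gg x) < root CARD('n) c"
      using d by (simp add: real_root_less_iff)
    also have "root CARD('n) (gg x) = 2 * mx x"
      unfolding gg_def using d mx_nonneg[of x] by (subst real_root_power_cancel) auto
    finally show ?thesis .
  qed
  show ?thesis
  proof (intro set_eqI)
    fix x :: "real^'n"
    have "x \<in> {x. gg x < c} \<longleftrightarrow> mx x < root CARD('n) c/2" using key[of x] by (simp add: mult.commute)
    also have "\<dots> \<longleftrightarrow> (\<forall>i. \<bar>x$i\<bar> < root CARD('n) c/2)" by (rule mx_less)
    also have "\<dots> \<longleftrightarrow> x \<in> box (\<chi> i. -(root CARD('n) c/2)) (\<chi> i. root CARD('n) c/2)"
      unfolding mem_box_cart vec_lambda_beta by (smt (verit))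
    finally show "x \<in> {x. gg x < c} \<longleftrightarrow> x \<in> box (\<chi> i. -(root CARD('n) c/2)) (\<chi> i. root CARD('n) c/2)" .
  qed
qed

lemma inner_const_basis:
  assumes "b \<in> (Basis :: (real^'n) set)" shows "(\<chi> i. c) \<bullet> b = c"
proof -
  from assms obtain j where "b = axis j 1" unfolding Basis_vec_def by auto
  then show ?thesis by (simp add: inner_axis)
qed

lemma gg_meas:
  assumes "0 \<le> c"
  shows "emeasure lebesgue {x::real^'n. gg x < c} = ennreal c"
proof -
  let ?r = "root CARD('n) c/2"
  have r: "0 \<le> ?r" using assms by simp
  have "emeasure lebesgue (box (\<chi> i. -?r) (\<chi> i. ?r) :: (real^'n) set)
      = emeasure lborel (box (\<chi> i. -?r) (\<chi> i. ?r) :: (real^'n) set)"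
    by (simp add: emeasure_completion)
  also have "\<dots> = (\<Prod>b\<in>(Basis::(real^'n) set). ((\<chi> i. ?r) - (\<chi> i. -?r)) \<bullet> b)"
    proof (rule emeasure_lborel_box)
    fix b :: "real^'n" assume "b \<in> Basis"
    then show "(\<chi> i. -?r) \<bullet> b \<le> (\<chi> i. ?r) \<bullet> b" using r by (simp add: inner_const_basis)
  qed
  also have "\<dots> = (\<Prod>b\<in>(Basis::(real^'n) set). 2 * ?r)"
    proof (intro arg_cong[where f=ennreal] prod.cong refl)
    fix b :: "real^'n" assume "b \<in> Basis"
    have "(\<chi> i. ?r) - (\<chi> i. -?r) = (\<chi> i. 2 * ?r)" by (simp add: vec_eq_iff)
    then show "((\<chi> i. ?r) - (\<chi> i. -?r)) \<bullet> b = 2 * ?r" using \<open>b \<in> Basis\<close> by (metis inner_const_basis)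
  qed
  also have "\<dots> = (2 * ?r) ^ CARD('n)" by simp
  also have "\<dots> = c" using assms by simp
  finally have "emeasure lebesgue (box (\<chi> i. -?r) (\<chi> i. ?r) :: (real^'n) set) = ennreal c" .
  moreover have "{x::real^'n. gg x < c} = box (\<chi> i. -?r) (\<chi> i. ?r)" by (rule gg_less[OF assms])
  ultimately show ?thesis by simp
qed


lemma gg_nonneg: "0 \<le> gg (x::real^'n)"
  unfolding gg_def using mx_nonneg[of x] by simp

lemma mx_ge: "\<bar>x$i\<bar> \<le> mx x"
  unfolding mx_def by (rule Max_ge) auto

lemma mx_const: "0 \<le> c \<Longrightarrow> mx ((\<chi> i. c) :: real^'n) = c"
proof -
  assume c: "0 \<le> c"
  have "range (\<lambda>i::'n. \<bar>(\<chi> i. c)$i :: real\<bar>) = {c}" using c by auto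
  then show ?thesis unfolding mx_def by simp
qed

lemma mx_lip:
  assumes "x \<in> maxball p r"
  shows "\<bar>mx x - mx p\<bar> \<le> r"
proof -
  have a: "\<forall>i. \<bar>x$i - p$i\<bar> \<le> r" using assms unfolding maxball_def by simp
  have "mx x \<le> mx p + r" unfolding mx_le
  proof
    fix i show "\<bar>x$i\<bar> \<le> mx p + r" using a[rule_format, of i] mx_ge[of p i] by linarith
  qed
  moreover have "mx p \<le> mx x + r" unfolding mx_le
  proof
    fix i show "\<bar>p$i\<bar> \<le> mx x + r" using a[rule_format, of i] mx_ge[of x i] by linarith
  qed
  ultimately show ?thesis by linarith
qed

definition SS :: "nat \<Rightarrow> (real^'n) set" where
  "SS n = {x. real n \<le> gg x \<and> gg x < real n + 1}"

lemma SS_diff: "SS n = {x. gg x < real n + 1} - {x. gg x < real n}"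
  unfolding SS_def by auto

lemma gg_sets: "0 \<le> c \<Longrightarrow> {x::real^'n. gg x < c} \<in> sets lebesgue"
  using gg_less[where 'n='n, of c] by simp

lemma SS_sets: "(SS n :: (real^'n) set) \<in> sets lebesgue"
  unfolding SS_diff by (intro sets.Diff gg_sets) auto

lemma SS_meas: "emeasure lebesgue (SS n :: (real^'n) set) = 1"
proof -
  have "emeasure lebesgue (SS n :: (real^'n) set) = emeasure lebesgue {x::real^'n. gg x < real n + 1} - emeasure lebesgue {x::real^'n. gg x < real n}"
  proof -
    have a: "emeasure lebesgue {x::real^'n. gg x < real n} \<noteq> \<infinity>" by (simp add: gg_meas)
    have b: "{x::real^'n. gg x < real n + 1} \<in> sets lebesgue" by (rule gg_sets) simp
    have c: "{x::real^'n. gg x < real n} \<in> sets lebesgue" by (rule gg_sets) simp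
    have d: "{x::real^'n. gg x < real n} \<subseteq> {x::real^'n. gg x < real n + 1}" by auto
    show ?thesis unfolding SS_diff using emeasure_Diff[OF a b c d] by simp
  qed
  also have "\<dots> = ennreal (real n + 1) - ennreal (real n)" by (simp add: gg_meas)
  also have "\<dots> = 1" by (subst ennreal_minus) auto
  finally show ?thesis .
qed

lemma SS_nonempty: "SS n \<noteq> ({} :: (real^'n) set)"
proof -
  let ?x = "(\<chi> i. root CARD('n) (real n) / 2) :: real^'n"
  have "gg ?x = real n" unfolding gg_def by (subst mx_const) auto
  then have "?x \<in> SS n" unfolding SS_def by simp
  then show ?thesis by blast
qed

lemma SS_mem: "(x::real^'n) \<in> SS (nat \<lfloor>gg x\<rfloor>)"
proof -
  have "real (nat \<lfloor>gg x\<rfloor>) = of_int \<lfloor>gg x\<rfloor>" using gg_nonneg[of x] by simp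
  then show ?thesis unfolding SS_def by simp
qed

lemma SS_unique: "x \<in> SS n \<Longrightarrow> x \<in> SS k \<Longrightarrow> n = k"
  unfolding SS_def by auto

lemma SS_partition: "partition_on UNIV (range SS :: (real^'n) set set)"
  unfolding partition_on_def
proof (intro conjI)
  show "\<Union> (range SS) = (UNIV :: (real^'n) set)" using SS_mem by blast
  show "disjoint (range SS :: (real^'n) set set)"
    unfolding disjoint_def using SS_unique by blast
  show "{} \<notin> (range SS :: (real^'n) set set)" using SS_nonempty by (metis imageE)
qed

lemma SS_local:
  fixes p :: "real^'n"
  shows "\<exists>e>0. \<exists>k. nbhd (range SS) (maxball p e) \<subseteq> SS ` {k, Suc k}"
proof -
  let ?h = "\<lambda>t::real. (2 * t) ^ CARD('n)"
  have "isCont ?h (mx p)" by (intro continuous_intros)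
  then obtain d where d: "d > 0" "\<And>t. dist t (mx p) < d \<Longrightarrow> dist (?h t) (?h (mx p)) < 1/2"
    unfolding continuous_at_eps_delta by (metis zero_less_divide_1_iff zero_less_numeral)
  define v where "v = gg p"
  define k where "k = nat (\<lfloor>v - 3/2\<rfloor> + 1)"
  have close: "\<bar>gg x - v\<bar> < 1/2" if "x \<in> maxball p (d/2)" for x
  proof -
    have "\<bar>mx x - mx p\<bar> \<le> d/2" by (rule mx_lip[OF that])
    then have "dist (mx x) (mx p) < d" using d(1) by (simp add: dist_real_def)
    then show ?thesis using d(2) unfolding v_def gg_def by (simp add: dist_real_def)
  qed
  have "nbhd (range SS) (maxball p (d/2)) \<subseteq> SS ` {k, Suc k}"
  proof
    fix X assume "X \<in> nbhd (range SS) (maxball p (d/2))"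
    then obtain n x where X: "X = SS n" "x \<in> SS n" "x \<in> maxball p (d/2)"
      unfolding nbhd_def by blast
    have "real n \<le> gg x" "gg x < real n + 1" using X(2) unfolding SS_def by auto
    with close[OF X(3)] have "v - 3/2 < real n" "real n < v + 1/2" by linarith+
    then have "n = k \<or> n = Suc k" unfolding k_def by linarith
    then show "X \<in> SS ` {k, Suc k}" using X(1) by blast
  qed
  then show ?thesis using d(1) by (intro exI[of _ "d/2"]) auto
qed


lemma part2:
  fixes P :: "real set set" and \<epsilon> :: "real \<Rightarrow> real"
  assumes P: "partition_on UNIV P"
    and meas: "\<forall>X\<in>P. X \<in> sets lebesgue \<and> emeasure lebesgue X < ennreal M"
    and pos: "\<forall>p. \<epsilon> p > 0"
  shows "\<exists>p. infinite (nbhd P (maxball1 p (\<epsilon> p))) \<or> card (nbhd P (maxball1 p (\<epsilon> p))) \<ge> 2"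
proof (rule ccontr)
  assume "\<not> ?thesis"
  then have H0: "finite (nbhd P (maxball1 p (\<epsilon> p))) \<and> \<not> 2 \<le> card (nbhd P (maxball1 p (\<epsilon> p)))" for p
    by blast
  have H: "finite (nbhd P (maxball1 p (\<epsilon> p))) \<and> card (nbhd P (maxball1 p (\<epsilon> p))) \<le> Suc 0" for p
    using H0[of p] by linarith
  have cover: "\<Union>P = UNIV" and disj: "disjoint P" using P unfolding partition_on_def by auto
  have ex: "\<exists>X\<in>P. y \<in> X" for y using cover by blast
  have uniq: "X = Y" if "X \<in> P" "Y \<in> P" "y \<in> X" "y \<in> Y" for X Y y
    using disj that unfolding disjoint_def by blast
  have sub: "ball p (\<epsilon> p) \<subseteq> X" if "X \<in> P" "p \<in> X" for p X
  proof
    fix y assume "y \<in> ball p (\<epsilon> p)"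
    then have y: "y \<in> maxball1 p (\<epsilon> p)" unfolding maxball1_def by (simp add: dist_real_def abs_minus_commute)
    obtain Y where Y: "Y \<in> P" "y \<in> Y" using ex by blast
    have p: "p \<in> maxball1 p (\<epsilon> p)" using pos unfolding maxball1_def by (simp add: less_imp_le)
    have "X \<in> nbhd P (maxball1 p (\<epsilon> p))" using that p unfolding nbhd_def by blast
    moreover have "Y \<in> nbhd P (maxball1 p (\<epsilon> p))" using Y y unfolding nbhd_def by blast
    ultimately have "X = Y" using H[of p] by (metis card_le_Suc0_iff_eq)
    then show "y \<in> X" using Y by simp
  qed
  have opn: "open X" if "X \<in> P" for X
    unfolding open_contains_ball using sub that pos by blast
  obtain X0 where X0: "X0 \<in> P" "0 \<in> X0" using ex by blast
  let ?V = "\<Union>(P - {X0})"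
  have "open ?V" using opn by auto
  moreover have "X0 \<inter> ?V \<inter> UNIV = {}" using uniq X0(1) by blast
  moreover have "UNIV \<subseteq> X0 \<union> ?V" using cover by blast
  ultimately have "X0 \<inter> UNIV = {} \<or> ?V \<inter> UNIV = {}"
    using connectedD[OF connected_UNIV opn[OF X0(1)]] by blast
  then have "?V = {}" using X0 by blast
  then have "X0 = UNIV" using cover by blast
  then have "emeasure lebesgue (UNIV::real set) < ennreal M" using meas X0(1) by auto
  moreover have "emeasure lebesgue (UNIV::real set) = \<infinity>"
    by (simp add: emeasure_completion)
  ultimately show False by simp
qed

theorem mainTheorem16:
  assumes "CARD('n::finite) \<ge> 2"
  shows "(\<exists>(P :: (real^'n) set set) (M::real) (\<epsilon> :: real^'n \<Rightarrow> real).
            partition_on UNIV P \<and> 0 < M \<and>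
            (\<forall>X\<in>P. X \<in> sets lebesgue \<and> emeasure lebesgue X < ennreal M) \<and>
            (\<forall>p. \<epsilon> p > 0) \<and>
            (\<forall>p. finite (nbhd P (maxball p (\<epsilon> p))) \<and>
                 card (nbhd P (maxball p (\<epsilon> p))) \<le> CARD('n)))
       \<and> (\<forall>(P :: real set set) (M::real).
            partition_on UNIV P \<and> 0 < M \<and>
            (\<forall>X\<in>P. X \<in> sets lebesgue \<and> emeasure lebesgue X < ennreal M) \<longrightarrow>
            (\<forall>\<epsilon> :: real \<Rightarrow> real. (\<forall>p. \<epsilon> p > 0) \<longrightarrow>
               (\<exists>p. infinite (nbhd P (maxball1 p (\<epsilon> p))) \<or>
                    card (nbhd P (maxball1 p (\<epsilon> p))) \<ge> 2)))"
proof (intro conjI allI impI)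
  define \<epsilon> :: "real^'n \<Rightarrow> real" where
    "\<epsilon> p = (SOME e. e > 0 \<and> (\<exists>k. nbhd (range SS) (maxball p e) \<subseteq> SS ` {k, Suc k}))" for p
  have e: "\<epsilon> p > 0 \<and> (\<exists>k. nbhd (range SS) (maxball p (\<epsilon> p)) \<subseteq> SS ` {k, Suc k})" for p
    unfolding \<epsilon>_def by (rule someI_ex) (rule SS_local)
  have fc: "finite (nbhd (range SS) (maxball p (\<epsilon> p))) \<and> card (nbhd (range SS) (maxball p (\<epsilon> p))) \<le> CARD('n)" for p
  proof -
    obtain k where k: "nbhd (range SS) (maxball p (\<epsilon> p)) \<subseteq> SS ` {k, Suc k}" using e[of p] by blast
    have "card (nbhd (range SS) (maxball p (\<epsilon> p))) \<le> card (SS ` {k, Suc k} :: (real^'n) set set)"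
      using k by (intro card_mono) auto
    also have "\<dots> \<le> card {k, Suc k}" by (rule card_image_le) simp
    also have "\<dots> = 2" by simp
    finally show ?thesis using assms finite_subset[OF k] by simp
  qed
  show "\<exists>(P :: (real^'n) set set) (M::real) (\<epsilon> :: real^'n \<Rightarrow> real).
            partition_on UNIV P \<and> 0 < M \<and>
            (\<forall>X\<in>P. X \<in> sets lebesgue \<and> emeasure lebesgue X < ennreal M) \<and>
            (\<forall>p. \<epsilon> p > 0) \<and>
            (\<forall>p. finite (nbhd P (maxball p (\<epsilon> p))) \<and>
                 card (nbhd P (maxball p (\<epsilon> p))) \<le> CARD('n))"
  proof (intro exI conjI)
    show "partition_on UNIV (range SS :: (real^'n) set set)" by (rule SS_partition)
    show "(0::real) < 2" by simp
    show "\<forall>X\<in>(range SS :: (real^'n) set set). X \<in> sets lebesgue \<and> emeasure lebesgue X < ennreal 2"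
    proof
      fix X :: "(real^'n) set" assume "X \<in> range SS"
      then obtain n where n: "X = SS n" by blast
      have "emeasure lebesgue X = 1" unfolding n by (rule SS_meas)
      moreover have "(1::ennreal) < ennreal 2" by simp
      ultimately show "X \<in> sets lebesgue \<and> emeasure lebesgue X < ennreal 2"
        using SS_sets[of n] n by simp
    qed
    show "\<forall>p. \<epsilon> p > 0" using e by blast
    show "\<forall>p. finite (nbhd (range SS) (maxball p (\<epsilon> p))) \<and> card (nbhd (range SS) (maxball p (\<epsilon> p))) \<le> CARD('n)"
      using fc by blast
  qed
next
  fix P :: "real set set" and M :: real and \<epsilon> :: "real \<Rightarrow> real"
  assume "partition_on UNIV P \<and> 0 < M \<and> (\<forall>X\<in>P. X \<in> sets lebesgue \<and> emeasure lebesgue X < ennreal M)"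
    and "\<forall>p. \<epsilon> p > 0"
  then show "\<exists>p. infinite (nbhd P (maxball1 p (\<epsilon> p))) \<or> card (nbhd P (maxball1 p (\<epsilon> p))) \<ge> 2"
    using part2[of P M \<epsilon>] by blast
qed

end
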